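(* Let $k\in\{3,4\}$. There is a constant $C$ independent of $N$, $\lambda$ and the frequencies such that $|M_{k+2}(\xi_1,\dots,\xi_{k+2})|\le C\,|\alpha_{k+2}(\xi_1,\dots,\xi_{k+2})|$ for all $(\xi_1,\dots,\xi_{k+2})\in\Omega$.
   Context: Fix $k\in\{3,4\}$, $s\in[\tfrac12,1)$, a large parameter $N\ge1$ and a period $\lambda\ge1$. The frequency variables range over $\frac1\lambda\mathbb Z$. The multiplier $m=m_{N,s}:\mathbb R\to(0,1]$ is a smooth even function, nonincreasing in $|\xi|$, with $m(\xi)=1$ for $|\xi|\le N$ and $m(\xi)=N^{1-s}|\xi|^{s-1}$ for $|\xi|>2N$. For $n\ge2$, $\Gamma_n=\{(\xi_1,\dots,\xi_n)\in(\frac1\lambda\mathbb Z)^n:\xi_1+\dots+\xi_n=0\}$. Write $m_j=m(\xi_j)$, $\alpha_n=\xi_1^3+\dots+\xi_n^3$, $M_{k+2}=i(m_1^2\xi_1^3+\dots+m_{k+2}^2\xi_{k+2}^3)$. For a tuple of frequencies, $\xi_1^*,\xi_2^*,\dots$ denotes its rearrangement with $|\xi_1^*|\ge|\xi_2^*|\ge\cdots$; when $k=3$ set $\xi_6^*=0$. Notation: $A\lesssim B$ means $A\le CB$ with $C$ independent of $N,\lambda$ and the frequencies; $A\sim B$ means $A\lesssim B\lesssim A$; $A\ll B$ (or $B\gg A$) means $A\le C_0^{-1}B$ for a fixed sufficiently large absolute constant $C_0$. The non-resonant set is $\Omega=\Omega_1\cup\Omega_2\cup\Omega_3\cup\Omega_4\subset\Gamma_{k+2}$,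 where $\Omega_1=\{|\xi_3^*|\gg|\xi_4^*|\}$; $\Omega_2=\{|\xi_1^*|\sim|\xi_2^*|\gtrsim N\gg|\xi_3^*|\sim|\xi_4^*|,\ |{\xi_1^*}^3+{\xi_2^*}^3|\gg|{\xi_3^*}^3+\dots+{\xi_{k+2}^*}^3|\}$; $\Omega_3=\{|\xi_1^*|\gg|\xi_3^*|,\ |\xi_1^*+\xi_2^*||\xi_1^*|\gg|\xi_3^*|^2\}$; $\Omega_4=\{|\xi_4^*|\gg|\xi_5^*|,\ |\xi_1^*+\xi_2^*||\xi_1^*+\xi_3^*||\xi_1^*+\xi_4^*|\gg|\xi_5^*||\xi_1^*|^2,\ |m(\xi_1^* )^2{\xi_1^*}^3+\dots+m(\xi_4^* )^2{\xi_4^*}^3|\gg|m(\xi_5^* )^2{\xi_5^*}^3+m(\xi_6^* )^2{\xi_6^*}^3|\}$ (each set consisting of the points of $\Gamma_{k+2}$ satisfying the listed conditions). *)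

theory Defs
  imports "HOL-Analysis.Analysis"
begin

definition smooth_fun :: "(real \<Rightarrow> real) \<Rightarrow> bool" where
  "smooth_fun f \<longleftrightarrow> (\<forall>n x. ((deriv ^^ n) f) differentiable (at x))"

text \<open>Admissible profile mu for the I-method multiplier: m_{N,s}(xi) = mu(xi/N).\<close>
definition profile :: "real \<Rightarrow> (real \<Rightarrow> real) \<Rightarrow> bool" where
  "profile s \<mu> \<longleftrightarrow> smooth_fun \<mu> \<and> (\<forall>x. \<mu> (-x) = \<mu> x)
     \<and> (\<forall>x y. \<bar>x\<bar> \<le> \<bar>y\<bar> \<longrightarrow> \<mu> y \<le> \<mu> x)
     \<and> (\<forall>x. 0 < \<mu> x \<and> \<mu> x \<le> 1)
     \<and> (\<forall>x. \<bar>x\<bar> \<le> 1 \<longrightarrow> \<mu> x = 1)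
     \<and> (\<forall>x. \<bar>x\<bar> > 2 \<longrightarrow> \<mu> x = \<bar>x\<bar> powr (s - 1))"

definition mult :: "(real \<Rightarrow> real) \<Rightarrow> real \<Rightarrow> real \<Rightarrow> real" where
  "mult \<mu> N \<xi> = \<mu> (\<xi> / N)"

definition ll :: "real \<Rightarrow> real \<Rightarrow> real \<Rightarrow> bool" where
  "ll c0 a b \<longleftrightarrow> a \<le> b / c0"

text \<open>Frequencies: xi :: nat => real, indices 0..<n with n = k+2.\<close>
definition Gamma :: "real \<Rightarrow> nat \<Rightarrow> (nat \<Rightarrow> real) set" where
  "Gamma lam n = {\<xi>. (\<forall>i<n. \<exists>z::int. \<xi> i = of_int z / lam) \<and> (\<Sum>i<n. \<xi> i) = 0}"

definition alpha :: "nat \<Rightarrow> (nat \<Rightarrow> real) \<Rightarrow> real" where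
  "alpha n \<xi> = (\<Sum>i<n. \<xi> i ^ 3)"

definition Mk :: "(real \<Rightarrow> real) \<Rightarrow> nat \<Rightarrow> (nat \<Rightarrow> real) \<Rightarrow> complex" where
  "Mk m n \<xi> = \<i> * complex_of_real (\<Sum>i<n. (m (\<xi> i))\<^sup>2 * \<xi> i ^ 3)"

text \<open>sigma is a decreasing rearrangement (0-based: xs 0 = xi_1^*), padded with zeros.\<close>
definition sorting_perm :: "nat \<Rightarrow> (nat \<Rightarrow> real) \<Rightarrow> (nat \<Rightarrow> nat) \<Rightarrow> bool" where
  "sorting_perm n \<xi> \<sigma> \<longleftrightarrow> bij_betw \<sigma> {..<n} {..<n}
     \<and> (\<forall>i j. i \<le> j \<longrightarrow> j < n \<longrightarrow> \<bar>\<xi> (\<sigma> j)\<bar> \<le> \<bar>\<xi> (\<sigma> i)\<bar>)"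

definition rearr :: "nat \<Rightarrow> (nat \<Rightarrow> real) \<Rightarrow> (nat \<Rightarrow> nat) \<Rightarrow> nat \<Rightarrow> real" where
  "rearr n \<xi> \<sigma> j = (if j < n then \<xi> (\<sigma> j) else 0)"

text \<open>Conditions defining Omega_1..Omega_4 in terms of the rearranged tuple x (x 0 = xi_1^*).
  A is the implicit constant in \<sim>, \<lesssim>; c0 the constant in <<.\<close>
definition Om1 :: "real \<Rightarrow> (nat \<Rightarrow> real) \<Rightarrow> bool" where
  "Om1 c0 x \<longleftrightarrow> ll c0 \<bar>x 3\<bar> \<bar>x 2\<bar>"

definition Om2 :: "real \<Rightarrow> real \<Rightarrow> real \<Rightarrow> nat \<Rightarrow> (nat \<Rightarrow> real) \<Rightarrow> bool" where
  "Om2 A c0 N n x \<longleftrightarrow>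
     \<bar>x 0\<bar> \<le> A * \<bar>x 1\<bar> \<and> \<bar>x 1\<bar> \<le> A * \<bar>x 0\<bar>
     \<and> N \<le> A * \<bar>x 1\<bar> \<and> ll c0 \<bar>x 2\<bar> N
     \<and> \<bar>x 2\<bar> \<le> A * \<bar>x 3\<bar> \<and> \<bar>x 3\<bar> \<le> A * \<bar>x 2\<bar>
     \<and> ll c0 \<bar>\<Sum>j\<in>{2..<n}. x j ^ 3\<bar> \<bar>x 0 ^ 3 + x 1 ^ 3\<bar>"

definition Om3 :: "real \<Rightarrow> (nat \<Rightarrow> real) \<Rightarrow> bool" where
  "Om3 c0 x \<longleftrightarrow> ll c0 \<bar>x 2\<bar> \<bar>x 0\<bar> \<and> ll c0 (\<bar>x 2\<bar>\<^sup>2) (\<bar>x 0 + x 1\<bar> * \<bar>x 0\<bar>)"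

definition Om4 :: "(real \<Rightarrow> real) \<Rightarrow> real \<Rightarrow> (nat \<Rightarrow> real) \<Rightarrow> bool" where
  "Om4 m c0 x \<longleftrightarrow> ll c0 \<bar>x 4\<bar> \<bar>x 3\<bar>
     \<and> ll c0 (\<bar>x 4\<bar> * \<bar>x 0\<bar>\<^sup>2) (\<bar>x 0 + x 1\<bar> * \<bar>x 0 + x 2\<bar> * \<bar>x 0 + x 3\<bar>)
     \<and> ll c0 \<bar>(m (x 4))\<^sup>2 * x 4 ^ 3 + (m (x 5))\<^sup>2 * x 5 ^ 3\<bar>
             \<bar>\<Sum>j<4. (m (x j))\<^sup>2 * x j ^ 3\<bar>"

definition Omega :: "(real \<Rightarrow> real) \<Rightarrow> real \<Rightarrow> real \<Rightarrow> real \<Rightarrow> real \<Rightarrow> nat \<Rightarrow> (nat \<Rightarrow> real) set" where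
  "Omega m A c0 N lam n = {\<xi> \<in> Gamma lam n. \<exists>\<sigma>. sorting_perm n \<xi> \<sigma> \<and>
      (let x = rearr n \<xi> \<sigma> in Om1 c0 x \<or> Om2 A c0 N n x \<or> Om3 c0 x \<or> Om4 m c0 x)}"

end

theory Submission
  imports Defs
begin


lemma mvt_bound:
  fixes F F' :: "real \<Rightarrow> real"
  assumes d: "\<And>t. (F has_real_derivative F' t) (at t)"
    and b: "\<And>t. min x y \<le> t \<Longrightarrow> t \<le> max x y \<Longrightarrow> \<bar>F' t\<bar> \<le> B"
  shows "\<bar>F x - F y\<bar> \<le> B * \<bar>x - y\<bar>"
proof (cases "x = y")
  case True then show ?thesis by simp
next
  case False
  show ?thesis
  proof (cases "y < x")
    case True
    from MVT2[OF True] d obtain z where z: "y < z" "z < x" "F x - F y = (x - y) * F' z" by blast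
    have "\<bar>F' z\<bar> \<le> B" using b z True by auto
    then show ?thesis using z True by (simp add: abs_mult mult.commute mult_right_mono)
  next
    case f2: False
    then have "x < y" using False by auto
    from MVT2[OF this] d obtain z where z: "x < z" "z < y" "F y - F x = (y - x) * F' z" by blast
    have "\<bar>F' z\<bar> \<le> B" using b z \<open>x<y\<close> by auto
    then have "\<bar>F y - F x\<bar> \<le> B * \<bar>y - x\<bar>" using z \<open>x<y\<close> by (simp add: abs_mult mult.commute mult_right_mono)
    then show ?thesis by (simp add: abs_minus_commute)
  qed
qed

lemma deriv_sym:
  fixes F F' :: "real \<Rightarrow> real"
  assumes d: "\<And>t. (F has_real_derivative F' t) (at t)"
    and s: "\<And>y. F (-y) = c * F y" and c: "c * c = 1"
  shows "F' (-x) = - c * F' x"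
proof -
  have e: "(\<lambda>y. c * F (-y)) = F"
  proof
    fix y show "c * F (-y) = F y" using s[of "-y"] c by (simp add: mult.assoc[symmetric])
  qed
  have "((\<lambda>y. c * F (-y)) has_real_derivative c * (F' (-x) * (-1))) (at x)"
    by (rule DERIV_cmult, rule DERIV_chain2[OF d], auto intro!: derivative_eq_intros)
  then have "(F has_real_derivative - c * F' (-x)) (at x)" by (simp add: e)
  then have "F' x = - c * F' (-x)" using DERIV_unique d by blast
  then have "c * F' x = - (c*c) * F' (-x)" by simp
  then show ?thesis using c by simp
qed

locale gf =
  fixes g g1 g2 g3 :: "real \<Rightarrow> real" and K :: real
  assumes d0: "\<And>x. (g has_real_derivative g1 x) (at x)"
    and d1: "\<And>x. (g1 has_real_derivative g2 x) (at x)"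
    and d2: "\<And>x. (g2 has_real_derivative g3 x) (at x)"
    and bnd: "\<And>x. \<bar>g3 x\<bar> \<le> K"
    and godd: "\<And>x. g (-x) = - g x"
    and g10: "g1 0 = 0" and g20: "g2 0 = 0"
begin

lemma g1even: "g1 (-x) = g1 x"
  using deriv_sym[OF d0, of "-1"] godd by simp

lemma g2odd: "g2 (-x) = - g2 x"
  using deriv_sym[OF d1, of 1] g1even by simp

lemma g2b: "\<bar>g2 x\<bar> \<le> K * \<bar>x\<bar>"
  using mvt_bound[OF d2, of x 0 K] bnd g20 by simp

lemma g1b: "\<bar>g1 x\<bar> \<le> K * x\<^sup>2"
proof -
  have "\<bar>g1 x - g1 0\<bar> \<le> (K * \<bar>x\<bar>) * \<bar>x - 0\<bar>"
  proof (rule mvt_bound[OF d1])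
    fix t assume "min x 0 \<le> t" "t \<le> max x 0"
    then have "\<bar>t\<bar> \<le> \<bar>x\<bar>" by auto
    moreover have "K \<ge> 0" using bnd[of 0] by simp
    ultimately show "\<bar>g2 t\<bar> \<le> K * \<bar>x\<bar>" using g2b[of t] by (meson mult_left_mono order_trans)
  qed
  then show ?thesis using g10 by (simp add: power2_eq_square abs_mult_self mult.assoc)
qed

lemma gsum2: "\<bar>g x + g y\<bar> \<le> K * (x\<^sup>2 + y\<^sup>2) * \<bar>x + y\<bar>"
proof -
  have K: "K \<ge> 0" using bnd[of 0] by simp
  have "\<bar>g x - g (-y)\<bar> \<le> (K * (x\<^sup>2 + y\<^sup>2)) * \<bar>x - (-y)\<bar>"
  proof (rule mvt_bound[OF d0])
    fix t assume a: "min x (-y) \<le> t" "t \<le> max x (-y)"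
    have "t\<^sup>2 \<le> x\<^sup>2 + y\<^sup>2"
    proof -
      have "\<bar>t\<bar> \<le> \<bar>x\<bar> \<or> \<bar>t\<bar> \<le> \<bar>y\<bar>" using a by linarith
      then have "t\<^sup>2 \<le> x\<^sup>2 \<or> t\<^sup>2 \<le> y\<^sup>2" by (simp add: abs_le_square_iff)
      then show ?thesis by (smt (verit) zero_le_power2)
    qed
    then show "\<bar>g1 t\<bar> \<le> K * (x\<^sup>2 + y\<^sup>2)" using g1b[of t] K by (meson mult_left_mono order_trans)
  qed
  then show ?thesis using godd[of y] by simp
qed

definition "H u v w = g ((u+v+w)/2) - g ((v+w-u)/2) - g ((u+w-v)/2) - g ((u+v-w)/2)"
definition "Q u v w = (g1 ((u+v+w)/2) + g1 ((v+w-u)/2) - g1 ((u+w-v)/2) - g1 ((u+v-w)/2))/2"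
definition "R u v w = (g2 ((u+v+w)/2) + g2 ((v+w-u)/2) + g2 ((u+w-v)/2) - g2 ((u+v-w)/2))/4"
definition "T u v w = (g3 ((u+v+w)/2) + g3 ((v+w-u)/2) + g3 ((u+w-v)/2) + g3 ((u+v-w)/2))/8"

lemmas ch0 = DERIV_chain2[OF d0] and ch1 = DERIV_chain2[OF d1] and ch2 = DERIV_chain2[OF d2]

lemma dR: "((\<lambda>t. R u v t) has_real_derivative T u v t) (at t)"
  unfolding R_def T_def
  by (auto intro!: derivative_eq_intros ch2 simp: field_simps)

lemma dQ: "((\<lambda>t. Q u t w) has_real_derivative R u t w) (at t)"
  unfolding R_def Q_def
  by (auto intro!: derivative_eq_intros ch1 simp: field_simps)

lemma dH: "((\<lambda>t. H t v w) has_real_derivative Q t v w) (at t)"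
  unfolding H_def Q_def
  by (auto intro!: derivative_eq_intros ch0 simp: field_simps)

lemma Tb: "\<bar>T u v w\<bar> \<le> K/2"
  unfolding T_def using bnd[of "(u+v+w)/2"] bnd[of "(v+w-u)/2"] bnd[of "(u+w-v)/2"] bnd[of "(u+v-w)/2"]
  by simp

lemma R0: "R u v 0 = 0"
proof -
  have e: "(v - u)/2 = - ((u-v)/2)" by (simp add: field_simps)
  show ?thesis unfolding R_def by (simp add: e g2odd add.commute)
qed

lemma Q0: "Q u 0 w = 0"
proof -
  have e: "(w - u)/2 = - ((u-w)/2)" by (simp add: field_simps)
  show ?thesis unfolding Q_def by (simp add: e g1even add.commute)
qed

lemma H0: "H 0 v w = 0"
proof -
  have e: "(v - w)/2 = - ((w-v)/2)" by (simp add: field_simps)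
  show ?thesis unfolding H_def by (simp add: e godd add.commute)
qed

lemma Rb: "\<bar>R u v w\<bar> \<le> K/2 * \<bar>w\<bar>"
  using mvt_bound[where F="\<lambda>t. R u v t" and F'="T u v", OF dR, of w 0 "K/2"] Tb R0 by simp

lemma Qb: "\<bar>Q u v w\<bar> \<le> K/2 * \<bar>w\<bar> * \<bar>v\<bar>"
  using mvt_bound[where F="\<lambda>t. Q u t w" and F'="\<lambda>t. R u t w", OF dQ, of v 0 "K/2 * \<bar>w\<bar>"] Rb Q0 by simp

lemma Hb: "\<bar>H u v w\<bar> \<le> K/2 * \<bar>w\<bar> * \<bar>v\<bar> * \<bar>u\<bar>"
  using mvt_bound[where F="\<lambda>t. H t v w" and F'="\<lambda>t. Q t v w", OF dH, of u 0 "K/2 * \<bar>w\<bar> * \<bar>v\<bar>"] Qb H0 by simp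

lemma four:
  assumes "a + b + c + d = 0"
  shows "\<bar>g a + g b + g c + g d\<bar> \<le> K/2 * \<bar>(a+b)*(a+c)*(a+d)\<bar>"
proof -
  have "H (a+b) (a+c) (a+d) = g a + g b + g c + g d"
  proof -
    have 1: "((a+b)+(a+c)+(a+d))/2 = a" using assms by simp
    have 2: "((a+c)+(a+d)-(a+b))/2 = -b" using assms by simp
    have 3: "((a+b)+(a+d)-(a+c))/2 = -c" using assms by simp
    have 4: "((a+b)+(a+c)-(a+d))/2 = -d" using assms by simp
    show ?thesis unfolding H_def 1 2 3 4 godd by simp
  qed
  then show ?thesis using Hb[of "a+b" "a+c" "a+d"] by (simp add: abs_mult mult_ac)
qed

end


lemma deriv_eq_open:
  fixes F G :: "real \<Rightarrow> real"
  assumes "open S" "x \<in> S" "\<And>y. y \<in> S \<Longrightarrow> F y = G y"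
    "(F has_real_derivative F') (at x)" "(G has_real_derivative G') (at x)"
  shows "F' = G'"
  using has_field_derivative_transform_within_open[OF assms(4,1,2,3)] assms(5) DERIV_unique by blast

locale prof =
  fixes s :: real and \<mu> :: "real \<Rightarrow> real"
  assumes P: "profile s \<mu>" and s1: "1/2 \<le> s" and s2: "s < 1"
begin

definition "D1 = deriv \<mu>"
definition "D2 = deriv D1"
definition "D3 = deriv D2"

lemma smooth: "\<And>n x. ((deriv ^^ n) \<mu>) differentiable (at x)"
  using P unfolding profile_def smooth_fun_def by blast

lemma dmu: "(\<mu> has_real_derivative D1 x) (at x)"
  using smooth[of 0 x] unfolding D1_def by (simp add: DERIV_deriv_iff_real_differentiable)
lemma dD1: "(D1 has_real_derivative D2 x) (at x)"
  using smooth[of 1 x] unfolding D1_def D2_def by (simp add: DERIV_deriv_iff_real_differentiable)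
lemma dD2: "(D2 has_real_derivative D3 x) (at x)"
  using smooth[of 2 x] unfolding D1_def D2_def D3_def
  by (simp add: DERIV_deriv_iff_real_differentiable numeral_2_eq_2)
lemma cD3: "continuous_on UNIV D3"
proof -
  have "\<And>x. D3 differentiable (at x)"
    using smooth[of 3] unfolding D1_def D2_def D3_def by (simp add: numeral_3_eq_3)
  then show ?thesis by (simp add: continuous_at_imp_continuous_on differentiable_imp_continuous_within)
qed
lemma cD2: "continuous_on UNIV D2"
  using dD2 by (metis DERIV_isCont continuous_at_imp_continuous_on)
lemma cD1: "continuous_on UNIV D1"
  using dD1 by (metis DERIV_isCont continuous_at_imp_continuous_on)
lemma cmu: "continuous_on UNIV \<mu>"
  using dmu by (metis DERIV_isCont continuous_at_imp_continuous_on)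

definition "g x = (\<mu> x)\<^sup>2 * x ^ 3"
definition "g1 x = 2 * \<mu> x * D1 x * x ^ 3 + 3 * (\<mu> x)\<^sup>2 * x\<^sup>2"
definition "g2 x = 2 * (D1 x)\<^sup>2 * x^3 + 2 * \<mu> x * D2 x * x^3 + 12 * \<mu> x * D1 x * x\<^sup>2 + 6 * (\<mu> x)\<^sup>2 * x"
definition "g3 x = 6 * D1 x * D2 x * x^3 + 2 * \<mu> x * D3 x * x^3 + 18 * (D1 x)\<^sup>2 * x\<^sup>2
   + 18 * \<mu> x * D2 x * x\<^sup>2 + 36 * \<mu> x * D1 x * x + 6 * (\<mu> x)\<^sup>2"

lemma dg: "(g has_real_derivative g1 x) (at x)"
  unfolding g_def g1_def
  by (auto intro!: derivative_eq_intros dmu simp: power2_eq_square power3_eq_cube algebra_simps)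
lemma dg1: "(g1 has_real_derivative g2 x) (at x)"
  unfolding g2_def g1_def
  by (auto intro!: derivative_eq_intros dmu dD1 simp: power2_eq_square power3_eq_cube algebra_simps)
lemma dg2: "(g2 has_real_derivative g3 x) (at x)"
  unfolding g2_def g3_def
  by (auto intro!: derivative_eq_intros dmu dD1 dD2 simp: power2_eq_square power3_eq_cube algebra_simps)

lemma mu_even: "\<mu> (-x) = \<mu> x" using P unfolding profile_def by blast
lemma godd: "g (-x) = - g x" unfolding g_def by (simp add: mu_even)
lemma g1even: "g1 (-x) = g1 x" using deriv_sym[OF dg, of "-1"] godd by simp
lemma g2odd: "g2 (-x) = - g2 x" using deriv_sym[OF dg1, of 1] g1even by simp
lemma g3even: "g3 (-x) = g3 x" using deriv_sym[OF dg2, of "-1"] g2odd by simp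

lemma mu_big: "\<bar>x\<bar> > 2 \<Longrightarrow> \<mu> x = \<bar>x\<bar> powr (s - 1)" using P unfolding profile_def by blast

lemma g_big: assumes "y > 2" shows "g y = y powr (2 * s + 1)"
proof -
  have y3: "y ^ 3 = y powr 3" using powr_realpow[of y 3] assms by simp
  have m: "\<mu> y = y powr (s-1)" using mu_big[of y] assms by simp
  have "g y = (y powr (s-1))\<^sup>2 * y powr 3" unfolding g_def m y3 ..
  also have "\<dots> = y powr ((s-1) + (s-1) + 3)"
    by (simp only: power2_eq_square powr_add)
  also have "(s-1) + (s-1) + 3 = 2 * s + 1" by simp
  finally show ?thesis .
qed

lemma g1_big: assumes "y > 2" shows "g1 y = (2 * s + 1) * y powr (2 * s)"
proof -
  have d: "((\<lambda>y. y powr (2 * s + 1)) has_real_derivative (2 * s + 1) * y powr (2 * s + 1 - 1)) (at y)"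
    by (rule has_real_derivative_powr) (use assms in auto)
  have "g1 y = (2 * s + 1) * y powr (2 * s + 1 - 1)"
    by (rule deriv_eq_open[of "{2<..}" y g "\<lambda>y. y powr (2 * s + 1)", OF _ _ _ dg d])
       (use assms g_big in auto)
  then show ?thesis by simp
qed

lemma g2_big: assumes "y > 2" shows "g2 y = (2 * s + 1) * (2 * s) * y powr (2 * s - 1)"
proof -
  have d: "((\<lambda>y. (2 * s + 1) * y powr (2 * s)) has_real_derivative (2 * s + 1) * ((2 * s) * y powr (2 * s - 1))) (at y)"
    by (rule DERIV_cmult, rule has_real_derivative_powr) (use assms in auto)
  have "g2 y = (2 * s + 1) * ((2 * s) * y powr (2 * s - 1))"
    by (rule deriv_eq_open[of "{2<..}" y g1 "\<lambda>y. (2 * s + 1) * y powr (2 * s)", OF _ _ _ dg1 d])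
       (use assms g1_big in auto)
  then show ?thesis by simp
qed

lemma g3_big: assumes "y > 2" shows "g3 y = (2 * s + 1) * (2 * s) * (2 * s - 1) * y powr (2 * s - 2)"
proof -
  have d: "((\<lambda>y. (2 * s + 1) * (2 * s) * y powr (2 * s - 1)) has_real_derivative (2 * s + 1) * (2 * s) * ((2 * s - 1) * y powr (2 * s - 1 - 1))) (at y)"
    by (rule DERIV_cmult, rule has_real_derivative_powr) (use assms in auto)
  have "g3 y = (2 * s + 1) * (2 * s) * ((2 * s - 1) * y powr (2 * s - 1 - 1))"
    by (rule deriv_eq_open[of "{2<..}" y g2 "\<lambda>y. (2 * s + 1) * (2 * s) * y powr (2 * s - 1)", OF _ _ _ dg2 d])
       (use assms g2_big in auto)
  then show ?thesis by (simp add: mult.assoc)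
qed

lemma g3_big_bound: assumes "\<bar>y\<bar> > 2" shows "\<bar>g3 y\<bar> \<le> 6"
proof -
  have "\<exists>z. z > 2 \<and> g3 y = g3 z"
  proof (cases "y > 2")
    case True then show ?thesis by blast
  next
    case False then have "-y > 2" using assms by auto
    then show ?thesis using g3even[of y] by (intro exI[of _ "-y"]) auto
  qed
  then obtain z where z: "z > 2" "g3 y = g3 z" by blast
  have p1: "z powr (2 * s-2) \<le> 1"
    using powr_mono[of "2 * s-2" 0 z] z s2 by simp
  have p0: "z powr (2 * s-2) \<ge> 0" by simp
  have a: "0 \<le> (2 * s+1) * (2 * s)" using s1 by simp
  have b: "(2 * s+1) * (2 * s) \<le> 6"
  proof -
    have "(2 * s+1) * (2 * s) \<le> 3 * 2" using s1 s2 by (intro mult_mono) auto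
    then show ?thesis by simp
  qed
  have c: "\<bar>2 * s-1\<bar> \<le> 1" using s1 s2 by simp
  have "\<bar>g3 z\<bar> = (2 * s+1) * (2 * s) * \<bar>2 * s-1\<bar> * z powr (2 * s-2)"
    using g3_big[OF z(1)] a s1 by (simp add: abs_mult)
  also have "\<dots> \<le> 6 * 1 * 1"
    by (intro mult_mono a b c p1 p0) (use a in auto)
  finally show ?thesis using z by simp
qed

lemma g3_bounded: obtains K where "K \<ge> 0" "\<And>x. \<bar>g3 x\<bar> \<le> K"
proof -
  have cg3: "continuous_on {-3..3} g3" unfolding g3_def
    by (intro continuous_intros continuous_on_subset[OF cD1] continuous_on_subset[OF cD2]
        continuous_on_subset[OF cD3] continuous_on_subset[OF cmu]) auto
  obtain B where B: "B \<ge> 0" "\<And>x. x \<in> {-3..3} \<Longrightarrow> norm (g3 x) \<le> B"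
    using continuous_on_compact_bound[OF compact_Icc cg3] by blast
  show ?thesis
  proof (rule that[of "max B 6"])
    fix x show "\<bar>g3 x\<bar> \<le> max B 6"
    proof (cases "\<bar>x\<bar> > 2")
      case True then show ?thesis using g3_big_bound by fastforce
    next
      case False then have "x \<in> {-3..3}" by auto
      then show ?thesis using B by fastforce
    qed
  qed auto
qed

lemma g10: "g1 0 = 0" unfolding g1_def by simp
lemma g20: "g2 0 = 0" unfolding g2_def by simp

lemma gf_ex: obtains K where "gf g g1 g2 g3 K"
proof -
  obtain K where "K \<ge> 0" "\<And>x. \<bar>g3 x\<bar> \<le> K" using g3_bounded by blast
  then show ?thesis using that[of K] dg dg1 dg2 godd g10 g20 unfolding gf_def by blast
qed

end


lemma cube_le: fixes x y :: real shows "\<bar>y\<bar> \<le> \<bar>x\<bar> \<Longrightarrow> \<bar>y^3\<bar> \<le> \<bar>x\<bar>^3"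
  by (metis abs_ge_zero power_abs power_mono)

lemma cube_le2: fixes x y :: real assumes h: "\<bar>y\<bar> \<le> \<bar>x\<bar>" shows "\<bar>y^3\<bar> \<le> \<bar>y\<bar> * x\<^sup>2"
proof -
  have "y\<^sup>2 \<le> x\<^sup>2" using power_mono[OF h abs_ge_zero[of y], of 2] by simp
  then have "\<bar>y\<bar> * y\<^sup>2 \<le> \<bar>y\<bar> * x\<^sup>2" by (simp add: mult_left_mono)
  moreover have "\<bar>y^3\<bar> = \<bar>y\<bar> * y\<^sup>2" by (simp add: power3_eq_cube power2_eq_square abs_mult)
  ultimately show ?thesis by simp
qed

lemma abs_lb: fixes x y :: real shows "\<bar>x\<bar> - \<bar>y\<bar> \<le> \<bar>x + y\<bar>" by arith

lemma lin4: fixes u X Y T Q :: real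
  shows "u \<le> X / 100 \<Longrightarrow> T \<le> X + Y \<Longrightarrow> X \<le> Q \<Longrightarrow> Y \<le> u \<Longrightarrow> 0 \<le> X \<Longrightarrow> T \<le> 2 * Q"
  by linarith

lemma fin:
  fixes S A B Z al M :: real
  assumes "S \<le> A * Z" "Z \<le> B * \<bar>al\<bar>" "0 \<le> A" "A * B \<le> M"
  shows "S \<le> M * \<bar>al\<bar>"
proof -
  have "A * Z \<le> A * (B * \<bar>al\<bar>)" using assms by (intro mult_left_mono) auto
  also have "\<dots> = (A * B) * \<bar>al\<bar>" by simp
  also have "\<dots> \<le> M * \<bar>al\<bar>" using assms by (intro mult_right_mono) auto
  finally show ?thesis using assms by linarith
qed

locale fprops =
  fixes f :: "real \<Rightarrow> real" and K N :: real
  assumes Kpos: "K \<ge> 0"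
    and fcube: "\<And>t. \<bar>f t\<bar> \<le> \<bar>t\<bar>^3"
    and fsmall: "\<And>t. \<bar>t\<bar> \<le> N \<Longrightarrow> f t = t^3"
    and fodd: "\<And>t. f (-t) = - f t"
    and f2: "\<And>x y. \<bar>f x + f y\<bar> \<le> K * (x\<^sup>2 + y\<^sup>2) * \<bar>x + y\<bar>"
    and f4: "\<And>a b c d. a + b + c + d = 0 \<Longrightarrow> \<bar>f a + f b + f c + f d\<bar> \<le> K/2 * \<bar>(a+b)*(a+c)*(a+d)\<bar>"
begin

lemma f2': "\<bar>y\<bar> \<le> \<bar>x\<bar> \<Longrightarrow> \<bar>f x + f y\<bar> \<le> 2 * K * x\<^sup>2 * \<bar>x + y\<bar>"
proof -
  assume h: "\<bar>y\<bar> \<le> \<bar>x\<bar>"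
  have "y\<^sup>2 \<le> x\<^sup>2" using power_mono[OF h abs_ge_zero[of y], of 2] by simp
  then have "K * (x\<^sup>2 + y\<^sup>2) * \<bar>x + y\<bar> \<le> K * (2 * x\<^sup>2) * \<bar>x + y\<bar>"
    using Kpos by (intro mult_right_mono mult_left_mono) auto
  then show ?thesis using f2[of x y] by simp
qed

lemma fc1: "\<bar>t\<bar> \<le> \<bar>x\<bar> \<Longrightarrow> \<bar>f t\<bar> \<le> \<bar>x\<bar>^3"
proof -
  assume h: "\<bar>t\<bar> \<le> \<bar>x\<bar>"
  have "\<bar>t\<bar>^3 \<le> \<bar>x\<bar>^3" by (rule power_mono[OF h]) simp
  then show ?thesis using fcube[of t] by linarith
qed

lemma fc2: "\<bar>y\<bar> \<le> \<bar>x\<bar> \<Longrightarrow> \<bar>f y\<bar> \<le> \<bar>y\<bar> * x\<^sup>2"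
  using fcube[of y] cube_le2[of y x] by (simp add: power_abs)

context
  fixes a b c d e h c0 :: real
  assumes sum: "a + b + c + d + e + h = 0"
    and o1: "\<bar>b\<bar> \<le> \<bar>a\<bar>" and o2: "\<bar>c\<bar> \<le> \<bar>b\<bar>" and o3: "\<bar>d\<bar> \<le> \<bar>c\<bar>"
    and o4: "\<bar>e\<bar> \<le> \<bar>d\<bar>" and o5: "\<bar>h\<bar> \<le> \<bar>e\<bar>"
    and c0: "c0 \<ge> 100"
begin

abbreviation "SS \<equiv> f a + f b + f c + f d + f e + f h"
abbreviation "AL \<equiv> a^3 + b^3 + c^3 + d^3 + e^3 + h^3"

lemma reg3:
  assumes h1: "\<bar>c\<bar> \<le> \<bar>a\<bar> / c0" and h2: "\<bar>c\<bar>\<^sup>2 \<le> \<bar>a + b\<bar> * \<bar>a\<bar> / c0"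
  shows "\<bar>SS\<bar> \<le> 10 * (K + 1) * \<bar>AL\<bar>"
proof -
  define p where "p = a + b"
  define Z where "Z = \<bar>p\<bar> * a\<^sup>2"
  have Z0: "Z \<ge> 0" unfolding Z_def by simp
  have L1: "\<bar>a^3 + b^3\<bar> \<ge> Z / 2"
  proof -
    have e: "a^3 + b^3 = p * (a\<^sup>2 - a*b + b\<^sup>2)" unfolding p_def by (simp add: algebra_simps power2_eq_square power3_eq_cube)
    have q: "a\<^sup>2 - a*b + b\<^sup>2 \<ge> a\<^sup>2 / 2"
    proof -
      have "0 \<le> (a - b)\<^sup>2 + b\<^sup>2" by simp
      then show ?thesis by (simp add: power2_eq_square algebra_simps)
    qed
    have q0: "a\<^sup>2 - a*b + b\<^sup>2 \<ge> 0" using q zero_le_power2[of a] by linarith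
    have "\<bar>a^3 + b^3\<bar> = \<bar>p\<bar> * (a\<^sup>2 - a*b + b\<^sup>2)" using e q0
      by (simp add: abs_mult)
    moreover have "\<bar>p\<bar> * (a\<^sup>2 / 2) \<le> \<bar>p\<bar> * (a\<^sup>2 - a*b + b\<^sup>2)" by (rule mult_left_mono[OF q]) simp
    ultimately show ?thesis unfolding Z_def by simp
  qed
  have c3: "\<bar>c\<bar>^3 \<le> Z / c0\<^sup>2"
  proof -
    have "\<bar>c\<bar>^3 = \<bar>c\<bar> * \<bar>c\<bar>\<^sup>2" by (simp add: power3_eq_cube power2_eq_square)
    also have "\<dots> \<le> (\<bar>a\<bar> / c0) * (\<bar>a + b\<bar> * \<bar>a\<bar> / c0)"
      using h1 h2 by (intro mult_mono) auto
    also have "\<dots> = Z / c0\<^sup>2" unfolding Z_def p_def by (simp add: power2_eq_square field_simps)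
    finally show ?thesis .
  qed
  have Zc: "Z / c0\<^sup>2 \<le> Z / 100"
  proof -
    have "100 * 1 \<le> c0 * c0" using c0 by (intro mult_mono) auto
    then have "100 \<le> c0\<^sup>2" by (simp add: power2_eq_square)
    then show ?thesis using Z0 by (intro divide_left_mono) auto
  qed
  have rest: "\<bar>c^3 + d^3 + e^3 + h^3\<bar> \<le> 4 * \<bar>c\<bar>^3"
  proof -
    have "\<bar>c^3\<bar> \<le> \<bar>c\<bar>^3" "\<bar>d^3\<bar> \<le> \<bar>c\<bar>^3" "\<bar>e^3\<bar> \<le> \<bar>c\<bar>^3" "\<bar>h^3\<bar> \<le> \<bar>c\<bar>^3"
      by (rule cube_le, use o3 o4 o5 in linarith)+
    then show ?thesis by linarith
  qed
  have frest: "\<bar>f c + f d + f e + f h\<bar> \<le> 4 * \<bar>c\<bar>^3"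
  proof -
    have "\<bar>f c\<bar> \<le> \<bar>c\<bar>^3" "\<bar>f d\<bar> \<le> \<bar>c\<bar>^3" "\<bar>f e\<bar> \<le> \<bar>c\<bar>^3" "\<bar>f h\<bar> \<le> \<bar>c\<bar>^3"
      by (rule fc1, use o3 o4 o5 in linarith)+
    then show ?thesis by linarith
  qed
  have AL: "\<bar>AL\<bar> \<ge> Z / 4"
  proof -
    have "AL = (a^3 + b^3) + (c^3 + d^3 + e^3 + h^3)" by simp
    then show ?thesis using L1 rest c3 Zc Z0 by linarith
  qed
  have fab: "\<bar>f a + f b\<bar> \<le> 2 * K * Z" using f2'[OF o1] unfolding Z_def p_def by (simp add: mult_ac)
  have "\<bar>SS\<bar> \<le> \<bar>f a + f b\<bar> + \<bar>f c + f d + f e + f h\<bar>" by linarith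
  also have "\<dots> \<le> 2 * K * Z + Z" using fab frest c3 Zc Z0 by linarith
  also have "\<dots> = (2 * K + 1) * Z" by (simp add: algebra_simps)
  finally show ?thesis by (rule fin[where B=4]) (use AL Kpos in auto)
qed


lemma divc: "0 \<le> Z \<Longrightarrow> Z / c0 \<le> Z / 100"
  using c0 by (intro divide_left_mono) auto

lemma sq_le: fixes x y :: real shows "\<bar>y\<bar> \<le> \<bar>x\<bar> \<Longrightarrow> y\<^sup>2 \<le> x\<^sup>2"
  using power_mono[of "\<bar>y\<bar>" "\<bar>x\<bar>" 2] by simp

lemma prod_le: fixes x y z :: real shows "\<bar>y\<bar> \<le> \<bar>x\<bar> \<Longrightarrow> \<bar>z\<bar> \<le> \<bar>x\<bar> \<Longrightarrow> \<bar>y * z\<bar> \<le> x\<^sup>2"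
proof -
  assume "\<bar>y\<bar> \<le> \<bar>x\<bar>" "\<bar>z\<bar> \<le> \<bar>x\<bar>"
  then have "\<bar>y\<bar> * \<bar>z\<bar> \<le> \<bar>x\<bar> * \<bar>x\<bar>" by (intro mult_mono) auto
  then show ?thesis by (simp add: abs_mult power2_eq_square)
qed

lemma reg1:
  assumes h1: "\<bar>d\<bar> \<le> \<bar>c\<bar> / c0"
  shows "\<bar>SS\<bar> \<le> 10 * (K + 1) * \<bar>AL\<bar>"
proof -
  define E where "E = a + b + c"
  have E: "E = - (d + e + h)" unfolding E_def using sum by linarith
  have dE: "\<bar>E\<bar> \<le> 3 * \<bar>d\<bar>" using E o4 o5 by linarith
  have u: "\<bar>c\<bar> / c0 \<le> \<bar>c\<bar> / 100" by (rule divc) simp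
  have Ec: "\<bar>E\<bar> \<le> 3 * (\<bar>c\<bar> / c0)" using dE h1 by linarith
  have Ec': "\<bar>E\<bar> \<le> \<bar>c\<bar>" using Ec u by linarith
  have a3b: "\<bar>a\<bar> \<le> 3 * \<bar>b\<bar>"
  proof -
    have "a = E - b - c" unfolding E_def by simp
    then show ?thesis using Ec' o2 by linarith
  qed
  define Z where "Z = a\<^sup>2 * \<bar>c\<bar>"
  have Z0: "Z \<ge> 0" unfolding Z_def by simp
  define W where "W = a\<^sup>2 + b\<^sup>2 + c\<^sup>2 - a*b - b*c - c*a"
  have idt: "a^3 + b^3 + c^3 = 3 * (a*b*c) + E * W" unfolding E_def W_def
    by (simp add: algebra_simps power2_eq_square power3_eq_cube)
  have oc: "\<bar>c\<bar> \<le> \<bar>a\<bar>" using o1 o2 by linarith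
  have Wb: "\<bar>W\<bar> \<le> 6 * a\<^sup>2"
  proof -
    have "b\<^sup>2 \<le> a\<^sup>2" "c\<^sup>2 \<le> a\<^sup>2" using o1 oc by (auto intro: sq_le)
    moreover have "\<bar>a*b\<bar> \<le> a\<^sup>2" "\<bar>b*c\<bar> \<le> a\<^sup>2" "\<bar>c*a\<bar> \<le> a\<^sup>2"
      using o1 oc by (auto intro!: prod_le)
    ultimately show ?thesis unfolding W_def abs_le_iff
      using zero_le_power2[of a] zero_le_power2[of b] zero_le_power2[of c] by linarith
  qed
  have EW: "\<bar>E * W\<bar> \<le> 18 * (Z / c0)"
  proof -
    have "\<bar>E * W\<bar> \<le> (3 * (\<bar>c\<bar> / c0)) * (6 * a\<^sup>2)" unfolding abs_mult
      using Ec Wb by (intro mult_mono) auto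
    then show ?thesis unfolding Z_def by (simp add: field_simps)
  qed
  have abc: "\<bar>3 * (a*b*c)\<bar> \<ge> Z"
  proof -
    have "(\<bar>a\<bar> * \<bar>a\<bar>) * \<bar>c\<bar> \<le> (\<bar>a\<bar> * (3 * \<bar>b\<bar>)) * \<bar>c\<bar>"
      using a3b by (intro mult_right_mono mult_left_mono) auto
    then show ?thesis unfolding Z_def by (simp add: abs_mult power2_eq_square mult_ac)
  qed
  have d3: "\<bar>d\<bar> * a\<^sup>2 \<le> Z / c0"
  proof -
    have "\<bar>d\<bar> * a\<^sup>2 \<le> (\<bar>c\<bar> / c0) * a\<^sup>2" using h1 by (intro mult_right_mono) auto
    then show ?thesis unfolding Z_def by (simp add: field_simps)
  qed
  have od: "\<bar>d\<bar> \<le> \<bar>a\<bar>" "\<bar>e\<bar> \<le> \<bar>a\<bar>" "\<bar>h\<bar> \<le> \<bar>a\<bar>" using o1 o2 o3 o4 o5 by linarith+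
  have ed: "\<bar>e\<bar> * a\<^sup>2 \<le> \<bar>d\<bar> * a\<^sup>2" "\<bar>h\<bar> * a\<^sup>2 \<le> \<bar>d\<bar> * a\<^sup>2"
    using o4 o5 by (intro mult_right_mono; simp)+
  have rest: "\<bar>d^3 + e^3 + h^3\<bar> \<le> 3 * (Z / c0)"
    using cube_le2[OF od(1)] cube_le2[OF od(2)] cube_le2[OF od(3)] ed d3 by linarith
  have Zc: "Z / c0 \<le> Z / 100" by (rule divc[OF Z0])
  have AL: "\<bar>AL\<bar> \<ge> Z / 2"
  proof -
    have "AL = 3 * (a*b*c) + E * W + (d^3 + e^3 + h^3)" using idt by simp
    then show ?thesis using abc EW rest Zc Z0 by linarith
  qed
  have fab: "\<bar>f a + f b\<bar> \<le> 4 * K * Z"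
  proof -
    have ab: "\<bar>a + b\<bar> \<le> 2 * \<bar>c\<bar>" using Ec' unfolding E_def by linarith
    have "\<bar>f a + f b\<bar> \<le> 2 * K * a\<^sup>2 * \<bar>a + b\<bar>" by (rule f2'[OF o1])
    also have "\<dots> \<le> 2 * K * a\<^sup>2 * (2 * \<bar>c\<bar>)" using ab Kpos by (intro mult_left_mono) auto
    finally show ?thesis unfolding Z_def by (simp add: mult_ac)
  qed
  have fc: "\<bar>f c\<bar> \<le> Z" using fc2[OF oc] unfolding Z_def by (simp add: mult_ac)
  have fr: "\<bar>f d\<bar> + \<bar>f e\<bar> + \<bar>f h\<bar> \<le> 3 * (Z / c0)"
    using fc2[OF od(1)] fc2[OF od(2)] fc2[OF od(3)] ed d3 by linarith
  have "\<bar>SS\<bar> \<le> 4 * K * Z + Z + 3 * (Z / c0)" using fab fc fr by linarith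
  also have "\<dots> \<le> (4 * K + 2) * Z" using Zc Z0 by (simp add: algebra_simps)
  finally show ?thesis by (rule fin[where B=2]) (use AL Kpos in auto)
qed

lemma cubesum: fixes x y :: real shows "\<bar>x^3 + y^3\<bar> \<ge> \<bar>x + y\<bar> * x\<^sup>2 / 2"
proof -
  have e: "x^3 + y^3 = (x+y) * (x\<^sup>2 - x*y + y\<^sup>2)" by (simp add: algebra_simps power2_eq_square power3_eq_cube)
  have q: "x\<^sup>2 - x*y + y\<^sup>2 \<ge> x\<^sup>2 / 2"
  proof -
    have "0 \<le> (x - y)\<^sup>2 + y\<^sup>2" by simp
    then show ?thesis by (simp add: power2_eq_square algebra_simps)
  qed
  have q0: "x\<^sup>2 - x*y + y\<^sup>2 \<ge> 0" using q zero_le_power2[of x] by linarith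
  have "\<bar>x^3 + y^3\<bar> = \<bar>x+y\<bar> * (x\<^sup>2 - x*y + y\<^sup>2)" using e q0 by (simp add: abs_mult)
  moreover have "\<bar>x+y\<bar> * (x\<^sup>2 / 2) \<le> \<bar>x+y\<bar> * (x\<^sup>2 - x*y + y\<^sup>2)" by (rule mult_left_mono[OF q]) simp
  ultimately show ?thesis by simp
qed

lemma reg2:
  assumes h1: "\<bar>c\<bar> \<le> N / c0" and h2: "\<bar>c^3 + d^3 + e^3 + h^3\<bar> \<le> \<bar>a^3 + b^3\<bar> / c0"
  shows "\<bar>SS\<bar> \<le> 10 * (K + 1) * \<bar>AL\<bar>"
proof -
  have "0 \<le> N / c0" using h1 abs_ge_zero[of c] by linarith
  then have N0: "N \<ge> 0" using c0 by (simp add: zero_le_divide_iff)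
  have "N / c0 \<le> N / 100" by (rule divc[OF N0])
  then have cN: "\<bar>c\<bar> \<le> N" using h1 N0 by linarith
  have small: "f c = c^3" "f d = d^3" "f e = e^3" "f h = h^3"
    by (rule fsmall, use cN o3 o4 o5 in linarith)+
  define Y where "Y = \<bar>a^3 + b^3\<bar>"
  have Y0: "Y \<ge> 0" unfolding Y_def by simp
  have Yc: "Y / c0 \<le> Y / 100" by (rule divc[OF Y0])
  have AL: "\<bar>AL\<bar> \<ge> Y / 2"
  proof -
    have "AL = (a^3 + b^3) + (c^3 + d^3 + e^3 + h^3)" by simp
    then have "\<bar>AL\<bar> \<ge> \<bar>a^3 + b^3\<bar> - \<bar>c^3 + d^3 + e^3 + h^3\<bar>"
      using abs_lb[of "a^3 + b^3" "c^3 + d^3 + e^3 + h^3"] by simp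
    then show ?thesis using h2 Yc Y0 unfolding Y_def by linarith
  qed
  have fab: "\<bar>f a + f b\<bar> \<le> 4 * K * Y"
  proof -
    have "\<bar>f a + f b\<bar> \<le> 2 * K * (a\<^sup>2 * \<bar>a + b\<bar>)" using f2'[OF o1] by (simp add: mult_ac)
    also have "\<dots> \<le> 2 * K * (2 * Y)" using cubesum[of a b] Kpos unfolding Y_def
      by (intro mult_left_mono) (auto simp: mult_ac)
    finally show ?thesis by simp
  qed
  have "SS = (f a + f b) + (c^3 + d^3 + e^3 + h^3)" using small by simp
  then have "\<bar>SS\<bar> \<le> 4 * K * Y + Y / c0" using fab h2 unfolding Y_def by linarith
  also have "\<dots> \<le> 4 * K * Y + Y" using Yc Y0 by linarith
  also have "\<dots> = (4 * K + 1) * Y" by (simp add: algebra_simps)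
  finally show ?thesis by (rule fin[where B=2]) (use AL Kpos in auto)
qed


lemma reg4:
  assumes h1: "\<bar>e\<bar> * a\<^sup>2 \<le> \<bar>a + b\<bar> * \<bar>a + c\<bar> * \<bar>a + d\<bar> / c0"
    and h2: "\<bar>f e + f h\<bar> \<le> \<bar>f a + f b + f c + f d\<bar> / c0"
  shows "\<bar>SS\<bar> \<le> 10 * (K + 1) * \<bar>AL\<bar>"
proof -
  define P where "P = \<bar>a + b\<bar> * \<bar>a + c\<bar> * \<bar>a + d\<bar>"
  have P0: "P \<ge> 0" unfolding P_def by simp
  have Pc: "P / c0 \<le> P / 100" by (rule divc[OF P0])
  define \<epsilon> where "\<epsilon> = a + b + c + d"
  have eps: "\<epsilon> = - (e + h)" unfolding \<epsilon>_def using sum by linarith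
  have ee: "\<bar>\<epsilon>\<bar> \<le> 2 * \<bar>e\<bar>" using eps o5 by linarith
  have od: "\<bar>c\<bar> \<le> \<bar>a\<bar>" "\<bar>d\<bar> \<le> \<bar>a\<bar>" "\<bar>e\<bar> \<le> \<bar>a\<bar>" "\<bar>h\<bar> \<le> \<bar>a\<bar>"
    using o1 o2 o3 o4 o5 by linarith+
  define d' where "d' = d - \<epsilon>"
  have s0: "a + b + c + d' = 0" unfolding d'_def \<epsilon>_def by simp
  define W where "W = \<bar>\<epsilon>\<bar> * a\<^sup>2"
  have W0: "W \<ge> 0" unfolding W_def by simp
  have WP: "W \<le> 2 * (P / c0)"
  proof -
    have "W \<le> (2 * \<bar>e\<bar>) * a\<^sup>2" unfolding W_def using ee by (intro mult_right_mono) auto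
    then show ?thesis using h1 unfolding P_def by simp
  qed
  have ab: "\<bar>a + b\<bar> * \<bar>a + c\<bar> \<le> 4 * a\<^sup>2"
  proof -
    have "\<bar>a + b\<bar> * \<bar>a + c\<bar> \<le> (2 * \<bar>a\<bar>) * (2 * \<bar>a\<bar>)"
      by (intro mult_mono; use o1 od in arith)
    then show ?thesis by (simp add: power2_eq_square)
  qed
  define Pp where "Pp = \<bar>a + b\<bar> * \<bar>a + c\<bar> * \<bar>a + d'\<bar>"
  have Pp: "\<bar>Pp - P\<bar> \<le> 4 * W"
  proof -
    have "\<bar>Pp - P\<bar> = \<bar>a + b\<bar> * \<bar>a + c\<bar> * \<bar>\<bar>a + d'\<bar> - \<bar>a + d\<bar>\<bar>"
    proof -
      have "Pp - P = (\<bar>a + b\<bar> * \<bar>a + c\<bar>) * (\<bar>a + d'\<bar> - \<bar>a + d\<bar>)"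
        unfolding Pp_def P_def by (simp add: algebra_simps)
      then show ?thesis by (simp add: abs_mult)
    qed
    also have "\<dots> \<le> \<bar>a + b\<bar> * \<bar>a + c\<bar> * \<bar>\<epsilon>\<bar>"
      unfolding d'_def by (intro mult_left_mono) auto
    also have "\<dots> \<le> (4 * a\<^sup>2) * \<bar>\<epsilon>\<bar>" using ab by (intro mult_right_mono) auto
    finally show ?thesis unfolding W_def by (simp add: mult_ac)
  qed
  have F4: "\<bar>f a + f b + f c + f d'\<bar> \<le> K / 2 * Pp"
    using f4[OF s0] unfolding Pp_def by (simp add: abs_mult)
  have d'a: "\<bar>d'\<bar> \<le> 3 * \<bar>a\<bar>" unfolding d'_def using ee od by linarith
  have dd: "\<bar>f d - f d'\<bar> \<le> 10 * K * W"
  proof -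
    have "\<bar>f d + f (-d')\<bar> \<le> K * (d\<^sup>2 + (-d')\<^sup>2) * \<bar>d + - d'\<bar>" by (rule f2)
    moreover have "d\<^sup>2 + (-d')\<^sup>2 \<le> 10 * a\<^sup>2"
    proof -
      have "d\<^sup>2 \<le> a\<^sup>2" using od by (intro sq_le) auto
      moreover have "d'\<^sup>2 \<le> (3 * \<bar>a\<bar>)\<^sup>2" using d'a by (intro sq_le) auto
      ultimately show ?thesis by (simp add: power_mult_distrib)
    qed
    ultimately have "\<bar>f d - f d'\<bar> \<le> K * (10 * a\<^sup>2) * \<bar>\<epsilon>\<bar>"
      using Kpos unfolding fodd d'_def
      by (smt (verit) abs_ge_zero mult_right_mono mult_left_mono)
    then show ?thesis unfolding W_def by (simp add: mult_ac)
  qed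
  have S4: "\<bar>f a + f b + f c + f d\<bar> \<le> K * P"
  proof -
    have "\<bar>f a + f b + f c + f d\<bar> \<le> \<bar>f a + f b + f c + f d'\<bar> + \<bar>f d - f d'\<bar>" by linarith
    also have "\<dots> \<le> K / 2 * Pp + 10 * K * W" using F4 dd by linarith
    also have "\<dots> \<le> K / 2 * (P + 4 * W) + 10 * K * W"
      using Pp Kpos by (intro add_right_mono mult_left_mono) auto
    also have "\<dots> = K * (P / 2 + 12 * W)" by (simp add: algebra_simps)
    also have "\<dots> \<le> K * P" using WP Pc Kpos P0 by (intro mult_left_mono) auto
    finally show ?thesis .
  qed
  have SSb: "\<bar>SS\<bar> \<le> 2 * K * P"
  proof -
    have q1: "\<bar>f a + f b + f c + f d\<bar> / c0 \<le> \<bar>f a + f b + f c + f d\<bar> / 100" by (rule divc) simp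
    have "SS = (f a + f b + f c + f d) + (f e + f h)" by simp
    then have q2: "\<bar>SS\<bar> \<le> \<bar>f a + f b + f c + f d\<bar> + \<bar>f e + f h\<bar>"
      using abs_triangle_ineq[of "f a + f b + f c + f d" "f e + f h"] by argo
    have "\<bar>SS\<bar> \<le> 2 * (K * P)"
      by (rule lin4[OF q1 q2 S4 h2]) simp
    then show ?thesis by (simp add: mult_ac)
  qed
  have cub: "\<bar>a^3 + b^3 + c^3 + d'^3\<bar> = 3 * Pp"
  proof -
    have e: "d' = -(a+b+c)" using s0 by linarith
    have "a^3 + b^3 + c^3 + d'^3 = 3 * ((a+b)*(a+c)*(a+d'))"
      unfolding e by (simp add: algebra_simps power3_eq_cube)
    then show ?thesis unfolding Pp_def by (simp add: abs_mult)
  qed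
  have dcube: "\<bar>d^3 - d'^3\<bar> \<le> 13 * W"
  proof -
    have id: "d^3 - d'^3 = \<epsilon> * (d\<^sup>2 + d*d' + d'\<^sup>2)" unfolding d'_def
      by (simp add: algebra_simps power2_eq_square power3_eq_cube)
    have "d\<^sup>2 \<le> a\<^sup>2" using od by (intro sq_le) auto
    moreover have "d'\<^sup>2 \<le> (3 * \<bar>a\<bar>)\<^sup>2" using d'a by (intro sq_le) auto
    moreover have "\<bar>d * d'\<bar> \<le> \<bar>a\<bar> * (3 * \<bar>a\<bar>)" unfolding abs_mult using od d'a by (intro mult_mono) auto
    moreover have "\<bar>a\<bar> * (3 * \<bar>a\<bar>) = 3 * a\<^sup>2" by (simp add: power2_eq_square abs_mult_self)
    moreover have "(3 * \<bar>a\<bar>)\<^sup>2 = 9 * a\<^sup>2" by (simp add: power_mult_distrib)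
    ultimately have "\<bar>d\<^sup>2 + d*d' + d'\<^sup>2\<bar> \<le> 13 * a\<^sup>2"
      using zero_le_power2[of d] zero_le_power2[of d'] by linarith
    then have "\<bar>\<epsilon>\<bar> * \<bar>d\<^sup>2 + d*d' + d'\<^sup>2\<bar> \<le> \<bar>\<epsilon>\<bar> * (13 * a\<^sup>2)" by (intro mult_left_mono) auto
    then show ?thesis unfolding id W_def by (simp add: abs_mult mult_ac)
  qed
  have eh: "\<bar>e^3 + h^3\<bar> \<le> 2 * (P / c0)"
  proof -
    have "\<bar>e^3\<bar> \<le> \<bar>e\<bar> * a\<^sup>2" "\<bar>h^3\<bar> \<le> \<bar>h\<bar> * a\<^sup>2" using od by (auto intro: cube_le2)
    moreover have "\<bar>h\<bar> * a\<^sup>2 \<le> \<bar>e\<bar> * a\<^sup>2" using o5 by (intro mult_right_mono) auto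
    ultimately show ?thesis using h1 unfolding P_def by linarith
  qed
  have AL: "\<bar>AL\<bar> \<ge> P"
  proof -
    have "AL = (a^3 + b^3 + c^3 + d'^3) + ((d^3 - d'^3) + (e^3 + h^3))" by simp
    then have "\<bar>AL\<bar> \<ge> \<bar>a^3 + b^3 + c^3 + d'^3\<bar> - \<bar>(d^3 - d'^3) + (e^3 + h^3)\<bar>"
      using abs_lb[of "a^3 + b^3 + c^3 + d'^3" "(d^3 - d'^3) + (e^3 + h^3)"] by simp
    moreover have "\<bar>(d^3 - d'^3) + (e^3 + h^3)\<bar> \<le> \<bar>d^3 - d'^3\<bar> + \<bar>e^3 + h^3\<bar>" by (rule abs_triangle_ineq)
    ultimately show ?thesis using cub dcube eh Pp WP Pc P0 by linarith
  qed
  show ?thesis by (rule fin[where A="2*K" and B=1, OF SSb]) (use AL Kpos in auto)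
qed

end
end


context prof
begin

lemma mu_pos: "0 < \<mu> x" and mu_le1: "\<mu> x \<le> 1" using P unfolding profile_def by blast+
lemma mu_one: "\<bar>x\<bar> \<le> 1 \<Longrightarrow> \<mu> x = 1" using P unfolding profile_def by blast

lemma f_scale:
  assumes N: "N > 0"
  shows "(mult \<mu> N t)\<^sup>2 * t^3 = N^3 * g (t / N)"
  unfolding mult_def g_def using N by (simp add: power_divide)

lemma fprops_inst:
  assumes G: "gf g g1 g2 g3 K" and N: "N \<ge> 1"
  shows "fprops (\<lambda>t. (mult \<mu> N t)\<^sup>2 * t^3) K N"
proof -
  interpret G: gf g g1 g2 g3 K by (rule G)
  have N0: "N > 0" using N by simp
  have N3: "N^3 > 0" using N0 by simp
  show ?thesis
  proof (unfold_locales)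
    show "0 \<le> K" using G.bnd[of 0] by simp
  next
    fix t
    have "(mult \<mu> N t)\<^sup>2 \<le> 1" using mu_pos[of "t/N"] mu_le1[of "t/N"] unfolding mult_def
      by (simp add: power_le_one)
    then have "(mult \<mu> N t)\<^sup>2 * \<bar>t\<bar>^3 \<le> 1 * \<bar>t\<bar>^3" by (intro mult_right_mono) auto
    then show "\<bar>(mult \<mu> N t)\<^sup>2 * t ^ 3\<bar> \<le> \<bar>t\<bar> ^ 3" by (simp add: abs_mult power_abs)
  next
    fix t assume "\<bar>t\<bar> \<le> N"
    then have "\<bar>t / N\<bar> \<le> 1" using N0 by simp
    then show "(mult \<mu> N t)\<^sup>2 * t ^ 3 = t ^ 3" unfolding mult_def using mu_one by simp
  next
    fix t show "(mult \<mu> N (- t))\<^sup>2 * (- t) ^ 3 = - ((mult \<mu> N t)\<^sup>2 * t ^ 3)"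
      unfolding mult_def using mu_even[of "t/N"] by simp
  next
    fix x y
    have "\<bar>g (x/N) + g (y/N)\<bar> \<le> K * ((x/N)\<^sup>2 + (y/N)\<^sup>2) * \<bar>x/N + y/N\<bar>" by (rule G.gsum2)
    then have "N^3 * \<bar>g (x/N) + g (y/N)\<bar> \<le> N^3 * (K * ((x/N)\<^sup>2 + (y/N)\<^sup>2) * \<bar>x/N + y/N\<bar>)"
      using N3 by simp
    also have "N^3 * (K * ((x/N)\<^sup>2 + (y/N)\<^sup>2) * \<bar>x/N + y/N\<bar>) = K * (x\<^sup>2 + y\<^sup>2) * \<bar>x + y\<bar>"
    proof -
      have "\<bar>x/N + y/N\<bar> = \<bar>x + y\<bar> / N" using N0 by (simp add: add_divide_distrib[symmetric])
      then show ?thesis using N0 by (simp add: field_simps power2_eq_square power3_eq_cube)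
    qed
    finally show "\<bar>(mult \<mu> N x)\<^sup>2 * x ^ 3 + (mult \<mu> N y)\<^sup>2 * y ^ 3\<bar> \<le> K * (x\<^sup>2 + y\<^sup>2) * \<bar>x + y\<bar>"
      unfolding f_scale[OF N0] using N3 by (simp add: abs_mult distrib_left[symmetric])
  next
    fix a b c d :: real assume s: "a + b + c + d = 0"
    have s': "a/N + b/N + c/N + d/N = 0" using s by (simp add: add_divide_distrib[symmetric])
    have "\<bar>g (a/N) + g (b/N) + g (c/N) + g (d/N)\<bar> \<le> K/2 * \<bar>(a/N+b/N)*(a/N+c/N)*(a/N+d/N)\<bar>"
      by (rule G.four[OF s'])
    then have "N^3 * \<bar>g (a/N) + g (b/N) + g (c/N) + g (d/N)\<bar> \<le> N^3 * (K/2 * \<bar>(a/N+b/N)*(a/N+c/N)*(a/N+d/N)\<bar>)"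
      using N3 by simp
    also have "N^3 * (K/2 * \<bar>(a/N+b/N)*(a/N+c/N)*(a/N+d/N)\<bar>) = K/2 * \<bar>(a+b)*(a+c)*(a+d)\<bar>"
    proof -
      have "(a/N+b/N)*(a/N+c/N)*(a/N+d/N) = ((a+b)*(a+c)*(a+d)) / N^3"
        using N0 by (simp add: field_simps power3_eq_cube)
      then show ?thesis using N0 by (simp add: abs_mult)
    qed
    finally show "\<bar>(mult \<mu> N a)\<^sup>2 * a ^ 3 + (mult \<mu> N b)\<^sup>2 * b ^ 3 + (mult \<mu> N c)\<^sup>2 * c ^ 3 + (mult \<mu> N d)\<^sup>2 * d ^ 3\<bar>
       \<le> K / 2 * \<bar>(a + b) * (a + c) * (a + d)\<bar>"
      unfolding f_scale[OF N0] using N3 by (simp add: abs_mult distrib_left[symmetric])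
  qed
qed

end

lemma sum_rearr:
  fixes h :: "real \<Rightarrow> 'b::comm_monoid_add"
  assumes sp: "sorting_perm n \<xi> \<sigma>" and n: "n = 5 \<or> n = 6" and h0: "h 0 = 0"
  shows "(\<Sum>i<n. h (\<xi> i)) = (\<Sum>j<6. h (rearr n \<xi> \<sigma> j))"
proof -
  have bij: "bij_betw \<sigma> {..<n} {..<n}" using sp unfolding sorting_perm_def by blast
  have "(\<Sum>i<n. h (\<xi> i)) = (\<Sum>j<n. h (\<xi> (\<sigma> j)))"
    using sum.reindex_bij_betw[OF bij, of "\<lambda>i. h (\<xi> i)"] by simp
  also have "\<dots> = (\<Sum>j<n. h (rearr n \<xi> \<sigma> j))" by (rule sum.cong) (auto simp: rearr_def)
  also have "\<dots> = (\<Sum>j<6. h (rearr n \<xi> \<sigma> j))"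
    using n by (auto simp: rearr_def h0 eval_nat_numeral)
  finally show ?thesis .
qed

lemma rearr_sorted:
  assumes sp: "sorting_perm n \<xi> \<sigma>" and ij: "i \<le> j"
  shows "\<bar>rearr n \<xi> \<sigma> j\<bar> \<le> \<bar>rearr n \<xi> \<sigma> i\<bar>"
  using sp ij unfolding sorting_perm_def rearr_def by (cases "j < n") auto

theorem mainTheorem2:
  fixes k :: nat and s :: real and \<mu> :: "real \<Rightarrow> real"
  assumes "k \<in> {3, 4}" and "1/2 \<le> s" and "s < 1" and "profile s \<mu>"
  shows "\<forall>A\<ge>1. \<exists>C0>0. \<forall>c0\<ge>C0. \<exists>C. \<forall>N lam \<xi>. N \<ge> 1 \<longrightarrow> lam \<ge> 1 \<longrightarrow>
           \<xi> \<in> Omega (mult \<mu> N) A c0 N lam (k + 2) \<longrightarrow>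
           cmod (Mk (mult \<mu> N) (k + 2) \<xi>) \<le> C * \<bar>alpha (k + 2) \<xi>\<bar>"
proof (intro allI impI)
  fix A :: real assume "A \<ge> 1"
  interpret prof s \<mu> using assms by unfold_locales auto
  obtain K where G: "gf g g1 g2 g3 K" using gf_ex by blast
  have n: "k + 2 = 5 \<or> k + 2 = 6" using assms(1) by auto
  have "\<forall>c0\<ge>(100::real). \<exists>C. \<forall>N lam \<xi>. N \<ge> 1 \<longrightarrow> lam \<ge> 1 \<longrightarrow>
           \<xi> \<in> Omega (mult \<mu> N) A c0 N lam (k + 2) \<longrightarrow>
           cmod (Mk (mult \<mu> N) (k + 2) \<xi>) \<le> C * \<bar>alpha (k + 2) \<xi>\<bar>"
  proof (intro allI impI exI[of _ "10 * (K + 1)"])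
    fix c0 N lam :: real and \<xi> :: "nat \<Rightarrow> real"
    assume c0: "100 \<le> c0" and N: "1 \<le> N" and "1 \<le> lam"
      and om: "\<xi> \<in> Omega (mult \<mu> N) A c0 N lam (k + 2)"
    define m where "m = mult \<mu> N"
    define f where "f = (\<lambda>t. (m t)\<^sup>2 * t^3)"
    interpret F: fprops f K N unfolding f_def m_def by (rule fprops_inst[OF G N])
    from om obtain \<sigma> where gam: "\<xi> \<in> Gamma lam (k+2)" and sp: "sorting_perm (k+2) \<xi> \<sigma>"
      and reg: "let x = rearr (k+2) \<xi> \<sigma> in Om1 c0 x \<or> Om2 A c0 N (k+2) x \<or> Om3 c0 x \<or> Om4 m c0 x"
      unfolding Omega_def m_def by blast
    define x where "x = rearr (k+2) \<xi> \<sigma>"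
    have sum0: "x 0 + x 1 + x 2 + x 3 + x 4 + x 5 = 0"
    proof -
      have "(\<Sum>i<k+2. \<xi> i) = 0" using gam unfolding Gamma_def by blast
      then show ?thesis using sum_rearr[OF sp n, of "\<lambda>t. t"] unfolding x_def
        by (simp add: eval_nat_numeral add.assoc)
    qed
    have ord: "\<bar>x 1\<bar> \<le> \<bar>x 0\<bar>" "\<bar>x 2\<bar> \<le> \<bar>x 1\<bar>" "\<bar>x 3\<bar> \<le> \<bar>x 2\<bar>" "\<bar>x 4\<bar> \<le> \<bar>x 3\<bar>" "\<bar>x 5\<bar> \<le> \<bar>x 4\<bar>"
      unfolding x_def by (rule rearr_sorted[OF sp]; simp)+
    have Mk: "cmod (Mk m (k+2) \<xi>) = \<bar>f (x 0) + f (x 1) + f (x 2) + f (x 3) + f (x 4) + f (x 5)\<bar>"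
    proof -
      have "(\<Sum>i<k+2. (m (\<xi> i))\<^sup>2 * \<xi> i ^ 3) = (\<Sum>j<6. f (x j))"
        using sum_rearr[OF sp n, of f] unfolding x_def f_def by simp
      also have "\<dots> = f (x 0) + f (x 1) + f (x 2) + f (x 3) + f (x 4) + f (x 5)"
        by (simp add: eval_nat_numeral add.assoc)
      finally have eq: "(\<Sum>i<k+2. (m (\<xi> i))\<^sup>2 * \<xi> i ^ 3) = f (x 0) + f (x 1) + f (x 2) + f (x 3) + f (x 4) + f (x 5)" .
      show ?thesis unfolding Mk_def eq norm_mult norm_ii norm_of_real by simp
    qed
    have al: "alpha (k+2) \<xi> = x 0 ^ 3 + x 1 ^ 3 + x 2 ^ 3 + x 3 ^ 3 + x 4 ^ 3 + x 5 ^ 3"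
      unfolding alpha_def using sum_rearr[OF sp n, of "\<lambda>t. t^3"] unfolding x_def
      by (simp add: eval_nat_numeral add.assoc)
    have main: "\<bar>f (x 0) + f (x 1) + f (x 2) + f (x 3) + f (x 4) + f (x 5)\<bar>
        \<le> 10 * (K + 1) * \<bar>x 0 ^ 3 + x 1 ^ 3 + x 2 ^ 3 + x 3 ^ 3 + x 4 ^ 3 + x 5 ^ 3\<bar>"
    proof -
      have R: "Om1 c0 x \<or> Om2 A c0 N (k+2) x \<or> Om3 c0 x \<or> Om4 m c0 x" using reg unfolding x_def Let_def .
      have x5: "k + 2 = 5 \<Longrightarrow> x 5 = 0" unfolding x_def rearr_def by simp
      note regs = F.reg1[OF sum0 ord c0] F.reg2[OF sum0 ord c0] F.reg3[OF sum0 ord c0] F.reg4[OF sum0 ord c0]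
      from R show ?thesis
      proof (elim disjE)
        assume "Om1 c0 x" then show ?thesis unfolding Om1_def ll_def by (rule regs(1))
      next
        assume o: "Om2 A c0 N (k+2) x"
        have "(\<Sum>j\<in>{2..<k+2}. x j ^ 3) = x 2 ^ 3 + x 3 ^ 3 + x 4 ^ 3 + x 5 ^ 3"
          using n x5 by (auto simp: eval_nat_numeral add.assoc)
        then show ?thesis using o unfolding Om2_def ll_def by (intro regs(2)) auto
      next
        assume "Om3 c0 x" then show ?thesis unfolding Om3_def ll_def by (intro regs(3)) auto
      next
        assume o: "Om4 m c0 x"
        have e: "(\<Sum>j<4. (m (x j))\<^sup>2 * x j ^ 3) = f (x 0) + f (x 1) + f (x 2) + f (x 3)"
          unfolding f_def by (simp add: eval_nat_numeral add.assoc)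
        show ?thesis
        proof (rule regs(4))
          show "\<bar>x 4\<bar> * (x 0)\<^sup>2 \<le> \<bar>x 0 + x 1\<bar> * \<bar>x 0 + x 2\<bar> * \<bar>x 0 + x 3\<bar> / c0"
            using o unfolding Om4_def ll_def by simp
          show "\<bar>f (x 4) + f (x 5)\<bar> \<le> \<bar>f (x 0) + f (x 1) + f (x 2) + f (x 3)\<bar> / c0"
            using o unfolding Om4_def ll_def e by (simp add: f_def)
        qed
      qed
    qed
    show "cmod (Mk (mult \<mu> N) (k + 2) \<xi>) \<le> 10 * (K + 1) * \<bar>alpha (k + 2) \<xi>\<bar>"
      using main Mk al unfolding m_def by simp
  qed
  then show "\<exists>C0>0. \<forall>c0\<ge>C0. \<exists>C. \<forall>N lam \<xi>. N \<ge> 1 \<longrightarrow> lam \<ge> 1 \<longrightarrow>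
           \<xi> \<in> Omega (mult \<mu> N) A c0 N lam (k + 2) \<longrightarrow>
           cmod (Mk (mult \<mu> N) (k + 2) \<xi>) \<le> C * \<bar>alpha (k + 2) \<xi>\<bar>"
    by (intro exI[of _ "100::real"]) simp
qed

end
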